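(* Let $\mathbb{X}$ be a real Banach space such that $\operatorname{Sm}\mathbb{X}$ is a dense $G_\delta$ subset of $\mathbb{X}$. If a bounded linear operator $T:\mathbb{X}\to\mathbb{X}$ preserves Birkhoff–James orthogonality at each point of $\operatorname{Sm}\mathbb{X}$, then $T$ is a scalar multiple of an isometry, i.e. there is $\lambda\ge0$ with $\|Tx\|=\lambda\|x\|$ for all $x\in\mathbb{X}$. (Equivalently, $\operatorname{Sm}\mathbb{X}\cap S_{\mathbb{X}}$ is a $\mathcal{K}$-set.)
   Context: $u\perp_B v$ means $\|u+\lambda v\|\ge\|u\|$ for all real $\lambda$. $T$ preserves Birkhoff–James orthogonality at $x$ if $x\perp_B v$ implies $Tx\perp_B Tv$ for all $v$. For non-zero $z$, $J(z)=\{f\in\mathbb{X}^*:\|f\|=1,\ f(z)=\|z\|\}$; $z$ is smooth if $J(z)$ is a singleton; $\operatorname{Sm}\mathbb{X}$ is the set of smooth points. $S_{\mathbb{X}}$ is the unit sphere. A set $A\subseteq S_{\mathbb{X}}$ is a $\mathcal{K}$-set if every bounded linear $T:\mathbb{X}\to\mathbb{X}$ preserving Birkhoff–James orthogonality at each point of $A$ is a scalar multiple of an isometry. *)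

theory Defs
  imports "HOL-Analysis.Analysis"
begin

definition bj_orth :: "'a::real_normed_vector \<Rightarrow> 'a \<Rightarrow> bool" where
  "bj_orth u v \<longleftrightarrow> (\<forall>c::real. norm (u + c *\<^sub>R v) \<ge> norm u)"

definition preserves_bj_at :: "('a::real_normed_vector \<Rightarrow> 'b::real_normed_vector) \<Rightarrow> 'a \<Rightarrow> bool" where
  "preserves_bj_at T x \<longleftrightarrow> (\<forall>v. bj_orth x v \<longrightarrow> bj_orth (T x) (T v))"

definition supp_funcs :: "'a::real_normed_vector \<Rightarrow> ('a \<Rightarrow> real) set" where
  "supp_funcs z = {f. bounded_linear f \<and> onorm f = 1 \<and> f z = norm z}"

definition smooth_point :: "'a::real_normed_vector \<Rightarrow> bool" where
  "smooth_point z \<longleftrightarrow> z \<noteq> 0 \<and> (\<exists>f. supp_funcs z = {f})"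

definition smooth_points :: "'a::real_normed_vector set" where
  "smooth_points = {z. smooth_point z}"

end

theory Submission
  imports Defs
begin

definition sfun :: "'a::real_normed_vector \<Rightarrow> 'a \<Rightarrow> real" where
  "sfun x = (SOME f. f \<in> supp_funcs x)"

lemma sfun_props:
  assumes "x \<in> smooth_points"
  shows "bounded_linear (sfun x)" "onorm (sfun x) = 1" "sfun x x = norm x" "x \<noteq> 0"
proof -
  from assms obtain f where f: "supp_funcs x = {f}" and nz: "x \<noteq> 0"
    unfolding smooth_points_def smooth_point_def by auto
  have "sfun x \<in> supp_funcs x" unfolding sfun_def by (rule someI[of _ f]) (simp add: f)
  thus "bounded_linear (sfun x)" "onorm (sfun x) = 1" "sfun x x = norm x"
    unfolding supp_funcs_def by auto
  show "x \<noteq> 0" by (rule nz)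
qed

lemma sfun_bound:
  assumes "x \<in> smooth_points" shows "\<bar>sfun x z\<bar> \<le> norm z"
  using onorm[OF sfun_props(1)[OF assms], of z] sfun_props(2)[OF assms] by simp

lemma key:
  fixes T :: "'a::real_normed_vector \<Rightarrow> 'a"
  assumes lin: "bounded_linear T" and pres: "\<forall>x\<in>smooth_points. preserves_bj_at T x"
    and x: "x \<in> smooth_points"
  shows "norm (T x) * \<bar>sfun x z\<bar> \<le> norm x * norm (T z)"
proof -
  interpret f: bounded_linear "sfun x" by (rule sfun_props(1)[OF x])
  interpret t: bounded_linear T by (rule lin)
  have nx: "norm x > 0" using sfun_props(4)[OF x] by simp
  define s where "s = sfun x z / norm x"
  define w where "w = z - s *\<^sub>R x"
  have fw: "sfun x w = 0" unfolding w_def s_def using nx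
    by (simp add: f.diff f.scale sfun_props(3)[OF x])
  have orth: "bj_orth x w" unfolding bj_orth_def
  proof
    fix c :: real
    have "norm x = sfun x (x + c *\<^sub>R w)" by (simp add: f.add f.scale fw sfun_props(3)[OF x])
    also have "\<dots> \<le> norm (x + c *\<^sub>R w)" using sfun_bound[OF x, of "x + c *\<^sub>R w"] by linarith
    finally show "norm x \<le> norm (x + c *\<^sub>R w)" .
  qed
  hence o2: "bj_orth (T x) (T w)" using pres x unfolding preserves_bj_at_def by blast
  show ?thesis
  proof (cases "s = 0")
    case True
    hence "sfun x z = 0" unfolding s_def using nx by simp
    thus ?thesis by simp
  next
    case False
    have "z = s *\<^sub>R x + w" unfolding w_def by simp
    hence "T z = s *\<^sub>R (T x + (1/s) *\<^sub>R T w)" using False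
      by (simp add: t.add t.scale scaleR_add_right)
    hence "norm (T z) = \<bar>s\<bar> * norm (T x + (1/s) *\<^sub>R T w)" by simp
    also have "\<dots> \<ge> \<bar>s\<bar> * norm (T x)" using o2 unfolding bj_orth_def
      by (simp add: mult_left_mono)
    finally have "\<bar>s\<bar> * norm (T x) \<le> norm (T z)" .
    hence "norm x * (\<bar>s\<bar> * norm (T x)) \<le> norm x * norm (T z)" using nx
      by (simp add: mult_left_mono)
    moreover have "norm x * \<bar>s\<bar> = \<bar>sfun x z\<bar>" unfolding s_def using nx by simp
    ultimately show ?thesis by (metis mult.assoc mult.commute)
  qed
qed

definition rat_n :: "('a::real_normed_vector \<Rightarrow> 'a) \<Rightarrow> 'a \<Rightarrow> real" where
  "rat_n T u = norm (T u) / norm u"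

lemma step:
  fixes T :: "'a::real_normed_vector \<Rightarrow> 'a"
  assumes lin: "bounded_linear T" and pres: "\<forall>x\<in>smooth_points. preserves_bj_at T x"
    and x: "x \<in> smooth_points" and y: "y \<in> smooth_points" and c: "0 < c" "c \<le> norm y"
  shows "rat_n T y \<ge> rat_n T x - (onorm T / c) * (norm y - sfun x y)"
proof -
  have nx: "norm x > 0" using sfun_props(4)[OF x] by simp
  have ny: "norm y > 0" using c by linarith
  define D where "D = norm y - sfun x y"
  have D0: "D \<ge> 0" unfolding D_def using sfun_bound[OF x, of y] by linarith
  have "norm (T x) * sfun x y \<le> norm x * norm (T y)"
    using key[OF lin pres x, of y] by (smt (verit) mult_left_mono norm_ge_zero abs_ge_self)
  hence "rat_n T x * sfun x y \<le> norm (T y)" unfolding rat_n_def using nx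
    by (simp add: field_simps)
  hence 1: "rat_n T x * (norm y - D) \<le> rat_n T y * norm y" unfolding rat_n_def D_def using ny
    by simp
  have rx0: "rat_n T x \<ge> 0" unfolding rat_n_def by simp
  have rxB: "rat_n T x \<le> onorm T" unfolding rat_n_def using onorm[OF lin, of x] nx
    by (simp add: field_simps)
  have B0: "onorm T \<ge> 0" using onorm_pos_le[OF lin] .
  from 1 have "rat_n T x - rat_n T x * D / norm y \<le> rat_n T y" using ny
    by (simp add: field_simps)
  moreover have "rat_n T x * D / norm y \<le> onorm T * D / c"
  proof -
    have "rat_n T x * D \<le> onorm T * D" using rxB D0 by (simp add: mult_right_mono)
    hence "rat_n T x * D / norm y \<le> onorm T * D / norm y" using ny by (simp add: divide_right_mono)
    also have "\<dots> \<le> onorm T * D / c" using c B0 D0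
      by (simp add: frac_le)
    finally show ?thesis .
  qed
  ultimately show ?thesis unfolding D_def by simp
qed


lemma chain:
  fixes T :: "'a::real_normed_vector \<Rightarrow> 'a"
  assumes lin: "bounded_linear T" and pres: "\<forall>x\<in>smooth_points. preserves_bj_at T x"
    and c: "0 < c"
  shows "(\<forall>i\<le>n. xs i \<in> smooth_points \<and> c \<le> norm (xs i)) \<Longrightarrow>
    rat_n T (xs n) \<ge> rat_n T (xs 0) - (onorm T / c) *
      (\<Sum>i<n. norm (xs (Suc i)) - sfun (xs i) (xs (Suc i)))"
proof (induction n)
  case 0
  then show ?case by simp
next
  case (Suc n)
  have IH: "rat_n T (xs n) \<ge> rat_n T (xs 0) - (onorm T / c) *
      (\<Sum>i<n. norm (xs (Suc i)) - sfun (xs i) (xs (Suc i)))"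
    using Suc by simp
  have st: "rat_n T (xs (Suc n)) \<ge> rat_n T (xs n) - (onorm T / c) * (norm (xs (Suc n)) - sfun (xs n) (xs (Suc n)))"
    using step[OF lin pres, of "xs n" "xs (Suc n)" c] Suc.prems c by simp
  show ?case using IH st by (simp add: distrib_left)
qed

lemma dbound:
  assumes x: "x \<in> smooth_points" and y: "y \<in> smooth_points"
    and d: "norm (y - x - h) \<le> e"
  shows "norm y - sfun x y \<le> sfun y h - sfun x h + 2 * e"
proof -
  interpret fx: bounded_linear "sfun x" by (rule sfun_props(1)[OF x])
  interpret fy: bounded_linear "sfun y" by (rule sfun_props(1)[OF y])
  define dd where "dd = y - x - h"
  have yx: "y = x + h + dd" unfolding dd_def by simp
  have 1: "sfun y x \<le> norm x" using sfun_bound[OF y, of x] by linarith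
  have 2: "\<bar>sfun y dd\<bar> \<le> e" "\<bar>sfun x dd\<bar> \<le> e"
    using sfun_bound[OF y, of dd] sfun_bound[OF x, of dd] d unfolding dd_def by linarith+
  have "norm y - sfun x y \<le> sfun y y - sfun y x - sfun x y + sfun x x"
    using 1 sfun_props(3)[OF x] sfun_props(3)[OF y] by linarith
  also have "\<dots> = sfun y h + sfun y dd - sfun x h - sfun x dd"
  proof -
    have e1: "y - x = h + dd" unfolding dd_def by simp
    have "sfun y y - sfun y x = sfun y h + sfun y dd"
      using fy.diff[of y x] fy.add[of h dd] e1 by simp
    moreover have "sfun x y - sfun x x = sfun x h + sfun x dd"
      using fx.diff[of y x] fx.add[of h dd] e1 by simp
    ultimately show ?thesis by linarith
  qed
  also have "\<dots> \<le> sfun y h - sfun x h + 2 * e" using 2 by linarith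
  finally show ?thesis .
qed

lemma sumbound:
  assumes "\<forall>i\<le>n. xs i \<in> smooth_points"
    and "\<forall>i<n. norm (xs (Suc i) - xs i - h) \<le> e"
  shows "(\<Sum>i<n. norm (xs (Suc i)) - sfun (xs i) (xs (Suc i))) \<le> 2 * norm h + 2 * e * n"
proof -
  have "(\<Sum>i<n. norm (xs (Suc i)) - sfun (xs i) (xs (Suc i)))
      \<le> (\<Sum>i<n. (sfun (xs (Suc i)) h - sfun (xs i) h) + 2 * e)"
  proof (rule sum_mono)
    fix i assume "i \<in> {..<n}"
    thus "norm (xs (Suc i)) - sfun (xs i) (xs (Suc i)) \<le> sfun (xs (Suc i)) h - sfun (xs i) h + 2 * e"
      using assms dbound[of "xs i" "xs (Suc i)" h e] by auto
  qed
  also have "\<dots> = (sfun (xs n) h - sfun (xs 0) h) + 2 * e * n"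
    using sum_lessThan_telescope[of "\<lambda>i. sfun (xs i) h" n] by (simp add: sum.distrib)
  also have "\<dots> \<le> 2 * norm h + 2 * e * n"
    using sfun_bound[of "xs n" h] sfun_bound[of "xs 0" h] assms(1) by force
  finally show ?thesis .
qed


lemma rat_scale:
  assumes lin: "bounded_linear T" and k: "k \<noteq> 0"
  shows "rat_n T (k *\<^sub>R e) = rat_n T e"
proof -
  interpret t: bounded_linear T by (rule lin)
  show ?thesis unfolding rat_n_def using k by (simp add: t.scale)
qed

lemma mono_rat:
  fixes T :: "'a::real_normed_vector \<Rightarrow> 'a"
  assumes lin: "bounded_linear T" and pres: "\<forall>x\<in>smooth_points. preserves_bj_at T x"
    and dense: "closure (smooth_points :: 'a set) = UNIV"
    and seg: "0 \<notin> closed_segment a b"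
  shows "rat_n T a \<le> rat_n T b"
proof (rule field_le_epsilon)
  fix e :: real assume e: "0 < e"
  define \<epsilon> where "\<epsilon> = e / 4"
  have ep: "\<epsilon> > 0" unfolding \<epsilon>_def using e by simp
  have a0: "a \<noteq> 0" and b0: "b \<noteq> 0" using seg ends_in_segment by metis+
  have ca: "isCont (rat_n T) a" unfolding rat_n_def using a0
    by (auto intro!: continuous_intros linear_continuous_at[OF lin])
  have cb: "isCont (rat_n T) b" unfolding rat_n_def using b0
    by (auto intro!: continuous_intros linear_continuous_at[OF lin])
  obtain \<eta>a where \<eta>a: "\<eta>a > 0" "\<forall>y. dist y a < \<eta>a \<longrightarrow> dist (rat_n T y) (rat_n T a) < \<epsilon>"
    using ca ep unfolding continuous_at_eps_delta by blast
  obtain \<eta>b where \<eta>b: "\<eta>b > 0" "\<forall>y. dist y b < \<eta>b \<longrightarrow> dist (rat_n T y) (rat_n T b) < \<epsilon>"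
    using cb ep unfolding continuous_at_eps_delta by blast
  obtain q where q: "q \<in> closed_segment a b" "\<forall>y\<in>closed_segment a b. norm q \<le> norm y"
    using continuous_attains_inf[OF compact_segment, of a b norm]
    by (auto intro!: continuous_intros)
  define m where "m = norm q"
  have m0: "m > 0" unfolding m_def using q seg by auto
  define K where "K = onorm T / (m / 2)"
  have K0: "K \<ge> 0" unfolding K_def using onorm_pos_le[OF lin] m0 by simp
  obtain n :: nat where n: "K * 2 * norm (b - a) / \<epsilon> < n" using reals_Archimedean2 by blast
  have n0: "n > 0"
  proof -
    have "K * 2 * norm (b - a) / \<epsilon> \<ge> 0" using K0 ep by simp
    thus ?thesis using n by (cases n) auto
  qed
  define \<delta> where "\<delta> = min (min (m/2) (min \<eta>a \<eta>b)) (\<epsilon> / (K * 4 * n + 1))"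
  have "K * 4 * real n + 1 > 0" using K0 by (simp add: add_nonneg_pos)
  hence "\<epsilon> / (K * 4 * n + 1) > 0" using ep by simp
  hence d0: "\<delta> > 0" unfolding \<delta>_def using m0 \<eta>a \<eta>b by auto
  define h where "h = (1 / real n) *\<^sub>R (b - a)"
  define p where "p i = a + real i *\<^sub>R h" for i
  have "\<forall>i. \<exists>y. y \<in> smooth_points \<and> dist y (p i) < \<delta>"
    using dense d0 closure_approachable by blast
  then obtain xs where xs: "\<forall>i. xs i \<in> smooth_points \<and> dist (xs i) (p i) < \<delta>" by metis
  have pseg: "p i \<in> closed_segment a b" if "i \<le> n" for i
  proof -
    have "p i = (1 - real i / real n) *\<^sub>R a + (real i / real n) *\<^sub>R b"
      unfolding p_def h_def by (simp add: algebra_simps)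
    moreover have "0 \<le> real i / real n" "real i / real n \<le> 1" using that n0 by auto
    ultimately show ?thesis unfolding in_segment by blast
  qed
  have xsn: "m / 2 \<le> norm (xs i)" if "i \<le> n" for i
  proof -
    have "m \<le> norm (p i)" using q(2) pseg[OF that] unfolding m_def by blast
    moreover have "norm (p i) - norm (xs i) \<le> norm (p i - xs i)" by (rule norm_triangle_ineq2)
    moreover have "norm (p i - xs i) < \<delta>" using xs by (simp add: dist_norm norm_minus_commute)
    moreover have "\<delta> \<le> m / 2" unfolding \<delta>_def by (meson min.cobounded1 order_trans)
    ultimately show ?thesis by linarith
  qed
  have psuc: "p (Suc i) = p i + h" for i unfolding p_def by (simp add: algebra_simps)
  have cons: "norm (xs (Suc i) - xs i - h) \<le> 2 * \<delta>" for i
  proof -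
    have "xs (Suc i) - xs i - h = (xs (Suc i) - p (Suc i)) - (xs i - p i)" using psuc by simp
    hence "norm (xs (Suc i) - xs i - h) \<le> norm (xs (Suc i) - p (Suc i)) + norm (xs i - p i)"
      by (metis norm_triangle_ineq4)
    thus ?thesis using xs[rule_format, of i] xs[rule_format, of "Suc i"] by (simp add: dist_norm)
  qed
  define S where "S = (\<Sum>i<n. norm (xs (Suc i)) - sfun (xs i) (xs (Suc i)))"
  have ch: "rat_n T (xs n) \<ge> rat_n T (xs 0) - K * S"
    using chain[OF lin pres, of "m/2" n xs] m0 xs xsn unfolding K_def S_def by auto
  have sb: "S \<le> 2 * norm h + 2 * (2 * \<delta>) * n"
    unfolding S_def using sumbound[of n xs h "2 * \<delta>"] xs cons by auto
  have hn: "norm h = norm (b - a) / n" unfolding h_def by simp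
  have t1: "K * (2 * norm h) < \<epsilon>"
  proof -
    have "K * 2 * norm (b - a) < \<epsilon> * n" using n ep by (simp add: field_simps)
    thus ?thesis unfolding hn using n0 by (simp add: field_simps)
  qed
  have t2: "K * (2 * (2 * \<delta>) * n) < \<epsilon>"
  proof -
    define A where "A = K * 4 * n"
    have A0: "A \<ge> 0" unfolding A_def using K0 by simp
    have "\<delta> \<le> \<epsilon> / (A + 1)" unfolding \<delta>_def A_def by simp
    hence "A * \<delta> \<le> A * (\<epsilon> / (A + 1))" using A0 by (rule mult_left_mono)
    also have "\<dots> < \<epsilon>" using A0 ep by (simp add: field_simps)
    finally have "A * \<delta> < \<epsilon>" .
    thus ?thesis unfolding A_def by (simp add: algebra_simps)
  qed
  have KS: "K * S < 2 * \<epsilon>"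
  proof -
    have "K * S \<le> K * (2 * norm h + 2 * (2 * \<delta>) * n)" using sb K0 by (simp add: mult_left_mono)
    thus ?thesis using t1 t2 by (simp add: distrib_left)
  qed
  have p0: "p 0 = a" unfolding p_def by simp
  have pn: "p n = b" unfolding p_def h_def using n0 by simp
  have "dist (xs 0) a < \<eta>a" using xs p0 \<delta>_def by (metis min_less_iff_conj order_less_le_trans min.cobounded1 min.cobounded2)
  hence e0: "dist (rat_n T (xs 0)) (rat_n T a) < \<epsilon>" using \<eta>a by blast
  have "dist (xs n) b < \<eta>b" using xs pn \<delta>_def by (metis min_less_iff_conj order_less_le_trans min.cobounded1 min.cobounded2)
  hence e1: "dist (rat_n T (xs n)) (rat_n T b) < \<epsilon>" using \<eta>b by blast
  show "rat_n T a \<le> rat_n T b + e"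
    using e0 e1 ch KS unfolding dist_real_def \<epsilon>_def by linarith
qed

theorem mainTheorem6:
  fixes T :: "'a::banach \<Rightarrow> 'a"
  assumes dense: "closure (smooth_points :: 'a set) = UNIV"
    and gd: "gdelta (smooth_points :: 'a set)"
    and lin: "bounded_linear T"
    and pres: "\<forall>x\<in>smooth_points. preserves_bj_at T x"
  shows "\<exists>c::real. c \<ge> 0 \<and> (\<forall>x. norm (T x) = c * norm x)"
proof (cases "\<exists>e::'a. e \<noteq> 0")
  case False
  interpret t: bounded_linear T by (rule lin)
  show ?thesis using False by (intro exI[of _ 0]) auto
next
  case True
  then obtain e :: 'a where e0: "e \<noteq> 0" by blast
  interpret t: bounded_linear T by (rule lin)
  have req: "rat_n T x = rat_n T e" if x0: "x \<noteq> 0" for x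
  proof (cases "0 \<in> closed_segment e x")
    case False
    hence "0 \<notin> closed_segment x e" by (simp add: closed_segment_commute)
    thus ?thesis using mono_rat[OF lin pres dense False] mono_rat[OF lin pres dense] by force
  next
    case True
    then obtain u where u: "0 \<le> u" "u \<le> 1" "0 = (1 - u) *\<^sub>R e + u *\<^sub>R x"
      unfolding in_segment by auto
    have u0: "u \<noteq> 0" using u e0 by auto
    have "x = (- (1 - u) / u) *\<^sub>R e"
    proof -
      have "u *\<^sub>R x = - ((1 - u) *\<^sub>R e)" using u(3) by (simp add: eq_neg_iff_add_eq_0 add.commute)
      hence "(1 / u) *\<^sub>R (u *\<^sub>R x) = (1 / u) *\<^sub>R (- ((1 - u) *\<^sub>R e))" by simp
      thus ?thesis using u0 by (simp add: divide_inverse algebra_simps)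
    qed
    moreover have "- (1 - u) / u \<noteq> 0" using x0 calculation by auto
    ultimately show ?thesis using rat_scale[OF lin] by metis
  qed
  show ?thesis
  proof (intro exI[of _ "rat_n T e"] conjI allI)
    show "rat_n T e \<ge> 0" unfolding rat_n_def by simp
    fix x
    show "norm (T x) = rat_n T e * norm x"
    proof (cases "x = 0")
      case True thus ?thesis by simp
    next
      case False
      thus ?thesis using req[OF False] unfolding rat_n_def by (simp add: field_simps)
    qed
  qed
qed

end
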